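(* If $S$ is a nilpotent right loop, then its group torsion $G_S$ is a solvable group.
   Context: A right loop is a set $S$ with binary operation $\circ$ and two-sided identity $1$ such that each equation $X\circ a=b$ has a unique solution. For $y,z\in S$, $f^S(y,z):S\to S$ sends $x$ to the unique $X$ with $X\circ(y\circ z)=(x\circ y)\circ z$; the group torsion $G_S\le\mathrm{Sym}(S)$ is generated by all $f^S(y,z)$. A congruence is an equivalence relation which is a right subloop of $S\times S$; an invariant right subloop is the class $T$ of $1$ under a congruence, $S/T=\{T\circ x\}$ with $(T\circ x)\circ(T\circ y)=T\circ(x\circ y)$. For congruences $\beta,\gamma$, $\gamma$ centralizes $\beta$ if there is a congruence $(\gamma|\beta)$ on the right loop $\beta\subseteq S\times S$ with: (i) $(x,y)(\gamma|\beta)(u,v)\Rightarrow x\gamma u$; (ii) for $(x,y)\in\beta$, $(u,v)\mapsto u$ is a bijection from the $(\gamma|\beta)$-class of $(x,y)$ to the $\gamma$-class of $x$; (iii) $(x,y)\in\gamma\Rightarrow(x,x)(\gamma|\beta)(y,y)$; (iv) $(x,y)(\gamma|\beta)(u,v)\Rightarrow(y,x)(\gamma|\beta)(v,u)$; (v) $(x,y)(\gamma|\beta)(u,v)$, $(y,z)(\gamma|\beta)(v,w)\Rightarrow(x,z)(\gamma|\beta)(u,w)$. The center $\mathcal Z(S)$ is the class of $1$ under the unique maximal congruence centralized by $S\times S$. $S$ is nilpotent if the series $\mathcal Z_0=\{1\}$, $\mathcal Z_1=\mathcal Z(S)$, $\mathcal Z_{i+1}/\mathcal Z_i=\mathcal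 Z(S/\mathcal Z_i)$ reaches $\mathcal Z_n=S$ for some $n$. *)

theory Defs
  imports "HOL-Algebra.Solvable_Groups" "HOL-Algebra.Bij"
begin

definition right_loop :: "'a set \<Rightarrow> ('a \<Rightarrow> 'a \<Rightarrow> 'a) \<Rightarrow> 'a \<Rightarrow> bool" where
  "right_loop S op e \<longleftrightarrow>
     e \<in> S \<and> (\<forall>x\<in>S. \<forall>y\<in>S. op x y \<in> S) \<and>
     (\<forall>x\<in>S. op e x = x \<and> op x e = x) \<and>
     (\<forall>a\<in>S. \<forall>b\<in>S. \<exists>!X. X \<in> S \<and> op X a = b)"

definition prod_op :: "('a \<Rightarrow> 'a \<Rightarrow> 'a) \<Rightarrow> 'a \<times> 'a \<Rightarrow> 'a \<times> 'a \<Rightarrow> 'a \<times> 'a" where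
  "prod_op op p q = (op (fst p) (fst q), op (snd p) (snd q))"

definition congruence :: "'a set \<Rightarrow> ('a \<Rightarrow> 'a \<Rightarrow> 'a) \<Rightarrow> 'a \<Rightarrow> 'a rel \<Rightarrow> bool" where
  "congruence S op e \<alpha> \<longleftrightarrow> equiv S \<alpha> \<and> right_loop \<alpha> (prod_op op) (e, e)"

text \<open>gamma centralizes beta (conditions (i)-(v)), with witness R = (gamma|beta).\<close>
definition centralizes :: "'a set \<Rightarrow> ('a \<Rightarrow> 'a \<Rightarrow> 'a) \<Rightarrow> 'a \<Rightarrow> 'a rel \<Rightarrow> 'a rel \<Rightarrow> bool" where
  "centralizes S op e \<gamma> \<beta> \<longleftrightarrow>
    (\<exists>R :: ('a \<times> 'a) rel.
       congruence \<beta> (prod_op op) (e, e) R \<and>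
       (\<forall>x y u v. ((x, y), (u, v)) \<in> R \<longrightarrow> (x, u) \<in> \<gamma>) \<and>
       (\<forall>p\<in>\<beta>. bij_betw fst (R `` {p}) (\<gamma> `` {fst p})) \<and>
       (\<forall>x y. (x, y) \<in> \<gamma> \<longrightarrow> ((x, x), (y, y)) \<in> R) \<and>
       (\<forall>x y u v. ((x, y), (u, v)) \<in> R \<longrightarrow> ((y, x), (v, u)) \<in> R) \<and>
       (\<forall>x y z u v w. ((x, y), (u, v)) \<in> R \<longrightarrow> ((y, z), (v, w)) \<in> R
          \<longrightarrow> ((x, z), (u, w)) \<in> R))"

definition center_cong :: "'a set \<Rightarrow> ('a \<Rightarrow> 'a \<Rightarrow> 'a) \<Rightarrow> 'a \<Rightarrow> 'a rel" where
  "center_cong S op e = (THE \<beta>. congruence S op e \<beta> \<and> centralizes S op e (S \<times> S) \<beta> \<and>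
      (\<forall>\<beta>'. congruence S op e \<beta>' \<and> centralizes S op e (S \<times> S) \<beta>' \<and> \<beta> \<subseteq> \<beta>' \<longrightarrow> \<beta>' = \<beta>))"

definition center :: "'a set \<Rightarrow> ('a \<Rightarrow> 'a \<Rightarrow> 'a) \<Rightarrow> 'a \<Rightarrow> 'a set" where
  "center S op e = center_cong S op e `` {e}"

definition inv_cong :: "'a set \<Rightarrow> ('a \<Rightarrow> 'a \<Rightarrow> 'a) \<Rightarrow> 'a \<Rightarrow> 'a set \<Rightarrow> 'a rel" where
  "inv_cong S op e T = (THE \<alpha>. congruence S op e \<alpha> \<and> \<alpha> `` {e} = T)"

definition quot_op :: "('a \<Rightarrow> 'a \<Rightarrow> 'a) \<Rightarrow> 'a rel \<Rightarrow> 'a set \<Rightarrow> 'a set \<Rightarrow> 'a set" where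
  "quot_op op \<alpha> A B = \<alpha> `` {op (SOME x. x \<in> A) (SOME y. y \<in> B)}"

fun upper_central :: "'a set \<Rightarrow> ('a \<Rightarrow> 'a \<Rightarrow> 'a) \<Rightarrow> 'a \<Rightarrow> nat \<Rightarrow> 'a set" where
  "upper_central S op e 0 = {e}"
| "upper_central S op e (Suc i) =
     (let \<alpha> = inv_cong S op e (upper_central S op e i)
      in \<Union> (center (S // \<alpha>) (quot_op op \<alpha>) (\<alpha> `` {e})))"

definition nilpotent_right_loop :: "'a set \<Rightarrow> ('a \<Rightarrow> 'a \<Rightarrow> 'a) \<Rightarrow> 'a \<Rightarrow> bool" where
  "nilpotent_right_loop S op e \<longleftrightarrow> (\<exists>n. upper_central S op e n = S)"

definition torsion_map :: "'a set \<Rightarrow> ('a \<Rightarrow> 'a \<Rightarrow> 'a) \<Rightarrow> 'a \<Rightarrow> 'a \<Rightarrow> 'a \<Rightarrow> 'a" where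
  "torsion_map S op y z = (\<lambda>x\<in>S. THE X. X \<in> S \<and> op X (op y z) = op (op x y) z)"

definition group_torsion :: "'a set \<Rightarrow> ('a \<Rightarrow> 'a \<Rightarrow> 'a) \<Rightarrow> ('a \<Rightarrow> 'a) set" where
  "group_torsion S op =
     generate (BijGroup S) {torsion_map S op y z | y z. y \<in> S \<and> z \<in> S}"

end

theory Submission
  imports Defs
begin

locale rloop =
  fixes S :: "'a set" and op :: "'a \<Rightarrow> 'a \<Rightarrow> 'a" and e :: 'a
  assumes RL: "right_loop S op e"
begin

lemma e_in: "e \<in> S" using RL by (simp add: right_loop_def)
lemma op_in[simp,intro]: "x \<in> S \<Longrightarrow> y \<in> S \<Longrightarrow> op x y \<in> S" using RL by (simp add: right_loop_def)
lemma e_left[simp]: "x \<in> S \<Longrightarrow> op e x = x" using RL by (simp add: right_loop_def)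
lemma e_right[simp]: "x \<in> S \<Longrightarrow> op x e = x" using RL by (simp add: right_loop_def)
lemma ex1: "a \<in> S \<Longrightarrow> b \<in> S \<Longrightarrow> \<exists>!X. X \<in> S \<and> op X a = b" using RL by (simp add: right_loop_def)

definition rdiv :: "'a \<Rightarrow> 'a \<Rightarrow> 'a" where
  "rdiv b a = (THE X. X \<in> S \<and> op X a = b)"

lemma rdiv: assumes "a \<in> S" "b \<in> S" shows "rdiv b a \<in> S" "op (rdiv b a) a = b"
  using theI'[OF ex1[OF assms]] unfolding rdiv_def by auto

lemma rdiv_unique: assumes "a \<in> S" "b \<in> S" "X \<in> S" "op X a = b" shows "X = rdiv b a"
  using ex1[OF assms(1,2)] rdiv[OF assms(1,2)] assms(3,4) by blast

lemma rcancel: assumes "X \<in> S" "Y \<in> S" "a \<in> S" "op X a = op Y a" shows "X = Y"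
  using ex1[of a "op Y a"] assms by auto

definition Cen :: "'a set" where
  "Cen = {c \<in> S. \<forall>x\<in>S. \<forall>y\<in>S. op c x = op x c \<and> op (op c x) y = op c (op x y)
     \<and> op (op x c) y = op x (op c y) \<and> op (op x y) c = op x (op y c)}"

lemma CenD: assumes "c \<in> Cen" "x \<in> S" "y \<in> S"
  shows "c \<in> S" "op c x = op x c" "op (op c x) y = op c (op x y)"
     "op (op x c) y = op x (op c y)" "op (op x y) c = op x (op y c)"
  using assms by (auto simp: Cen_def)

lemma e_Cen: "e \<in> Cen" using e_in by (auto simp: Cen_def)

lemma Cen_mult: assumes c: "c \<in> Cen" and d: "d \<in> Cen" shows "op c d \<in> Cen"
proof -
  have cS: "c \<in> S" and dS: "d \<in> S" using c d by (auto simp: Cen_def)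
  show ?thesis unfolding Cen_def
  proof (intro CollectI conjI ballI)
    show "op c d \<in> S" using cS dS by simp
    fix x y assume x: "x \<in> S" and y: "y \<in> S"
    have "op (op c d) x = op c (op d x)" using CenD(3)[OF c dS x] .
    also have "\<dots> = op c (op x d)" using CenD(2)[OF d x x] by simp
    also have "\<dots> = op (op c x) d" using CenD(3)[OF c x dS] by simp
    also have "\<dots> = op (op x c) d" using CenD(2)[OF c x x] by simp
    also have "\<dots> = op x (op c d)" using CenD(4)[OF c x dS] .
    finally show "op (op c d) x = op x (op c d)" .
    have "op (op (op c d) x) y = op (op c (op d x)) y" using CenD(3)[OF c dS x] by simp
    also have "\<dots> = op c (op (op d x) y)" using CenD(3)[OF c _ y] dS x by simp
    also have "\<dots> = op c (op d (op x y))" using CenD(3)[OF d x y] by simp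
    also have "\<dots> = op (op c d) (op x y)" using CenD(3)[OF c dS, of "op x y"] x y by simp
    finally show "op (op (op c d) x) y = op (op c d) (op x y)" .
    have "op (op x (op c d)) y = op (op (op x c) d) y" using CenD(4)[OF c x dS] by simp
    also have "\<dots> = op (op x c) (op d y)" using CenD(4)[OF d _ y, of "op x c"] x cS by simp
    also have "\<dots> = op x (op c (op d y))" using CenD(4)[OF c x, of "op d y"] dS y by simp
    also have "\<dots> = op x (op (op c d) y)" using CenD(3)[OF c dS y] by simp
    finally show "op (op x (op c d)) y = op x (op (op c d) y)" .
    have "op (op x y) (op c d) = op (op (op x y) c) d" using CenD(4)[OF c _ dS, of "op x y"] x y by simp
    also have "\<dots> = op (op x (op y c)) d" using CenD(5)[OF c x y] by simp
    also have "\<dots> = op x (op (op y c) d)" using CenD(5)[OF d x, of "op y c"] y cS by simp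
    also have "\<dots> = op x (op y (op c d))" using CenD(4)[OF c y dS] by simp
    finally show "op (op x y) (op c d) = op x (op y (op c d))" .
  qed
qed

definition cinv :: "'a \<Rightarrow> 'a" where "cinv c = rdiv e c"

lemma cinv: assumes c: "c \<in> Cen" shows "cinv c \<in> S" "op (cinv c) c = e" "op c (cinv c) = e"
proof -
  have cS: "c \<in> S" using c by (auto simp: Cen_def)
  show 1: "cinv c \<in> S" "op (cinv c) c = e" using rdiv[OF cS e_in] by (auto simp: cinv_def)
  show "op c (cinv c) = e" using CenD(2)[OF c 1(1) e_in] 1 by simp
qed

lemma cinv_Cen: assumes c: "c \<in> Cen" shows "cinv c \<in> Cen"
proof -
  have cS: "c \<in> S" using c by (auto simp: Cen_def)
  note ci = cinv[OF c]
  define c' where "c' = cinv c"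
  have c'S: "c' \<in> S" and cc: "op c' c = e" using ci by (auto simp: c'_def)
  have a1: "op (op c' x) c = x" if x: "x \<in> S" for x
  proof -
    have "op (op c' x) c = op c' (op x c)" using CenD(5)[OF c c'S x] .
    also have "\<dots> = op c' (op c x)" using CenD(2)[OF c x x] by simp
    also have "\<dots> = op (op c' c) x" using CenD(4)[OF c c'S x] by simp
    finally show ?thesis using cc x by simp
  qed
  have a2: "op (op x c') c = x" if x: "x \<in> S" for x
    using CenD(5)[OF c x c'S] cc x by simp
  show ?thesis unfolding c'_def[symmetric] Cen_def
  proof (intro CollectI conjI ballI)
    show "c' \<in> S" by fact
    fix x y assume x: "x \<in> S" and y: "y \<in> S"
    show "op c' x = op x c'"
      by (rule rcancel[OF _ _ cS]) (simp_all add: c'S x a1 a2)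
    have "op (op (op c' x) y) c = op (op c' x) (op y c)" using CenD(5)[OF c _ y, of "op c' x"] c'S x by simp
    also have "\<dots> = op (op c' x) (op c y)" using CenD(2)[OF c y y] by simp
    also have "\<dots> = op (op (op c' x) c) y" using CenD(4)[OF c _ y, of "op c' x"] c'S x by simp
    finally have b1: "op (op (op c' x) y) c = op x y" using a1[OF x] by simp
    have "op (op c' (op x y)) c = op c' (op (op x y) c)" using CenD(5)[OF c c'S, of "op x y"] x y by simp
    also have "\<dots> = op c' (op c (op x y))" using CenD(2)[OF c, of "op x y"] x y by simp
    also have "\<dots> = op (op c' c) (op x y)" using CenD(4)[OF c c'S, of "op x y"] x y by simp
    finally have b2: "op (op c' (op x y)) c = op x y" using cc x y by simp
    show "op (op c' x) y = op c' (op x y)"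
      by (rule rcancel[OF _ _ cS]) (simp_all add: c'S x y b1 b2)
    have "op (op (op x c') y) c = op (op x c') (op y c)" using CenD(5)[OF c _ y, of "op x c'"] c'S x by simp
    also have "\<dots> = op (op x c') (op c y)" using CenD(2)[OF c y y] by simp
    also have "\<dots> = op (op (op x c') c) y" using CenD(4)[OF c _ y, of "op x c'"] c'S x by simp
    finally have d1: "op (op (op x c') y) c = op x y" using a2[OF x] by simp
    have d2: "op (op x (op c' y)) c = op x y"
      using CenD(5)[OF c x, of "op c' y"] a1[OF y] c'S y by simp
    show "op (op x c') y = op x (op c' y)"
      by (rule rcancel[OF _ _ cS]) (simp_all add: c'S x y d1 d2)
    have f1: "op (op (op x y) c') c = op x y"
      using CenD(5)[OF c _ c'S, of "op x y"] cc x y by simp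
    have f2: "op (op x (op y c')) c = op x y"
      using CenD(5)[OF c x, of "op y c'"] a2[OF y] c'S y by simp
    show "op (op x y) c' = op x (op y c')"
      by (rule rcancel[OF _ _ cS]) (simp_all add: c'S x y f1 f2)
  qed
qed

lemma Cen_S: "c \<in> Cen \<Longrightarrow> c \<in> S" by (simp add: Cen_def)

lemma cinv_left: assumes c: "c \<in> Cen" and y: "y \<in> S" shows "op (cinv c) (op c y) = y"
  using CenD(4)[OF c cinv(1)[OF c] y] cinv[OF c] y by simp

lemma cinv_right: assumes c: "c \<in> Cen" and y: "y \<in> S" shows "op c (op (cinv c) y) = y"
  using CenD(4)[OF cinv_Cen[OF c] Cen_S[OF c] y] cinv[OF c] y by simp

lemma Cen_prod: assumes c: "c \<in> Cen" and d: "d \<in> Cen" and x: "x \<in> S" and y: "y \<in> S"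
  shows "op (op c x) (op d y) = op (op c d) (op x y)"
proof -
  note cS = Cen_S[OF c] and dS = Cen_S[OF d]
  have xy: "op x y \<in> S" using x y by simp
  have "op (op c x) (op d y) = op c (op x (op d y))" by (rule CenD(3)[OF c x op_in[OF dS y]])
  also have "\<dots> = op c (op x (op y d))" by (metis CenD(2)[OF d y y])
  also have "\<dots> = op c (op (op x y) d)" by (metis CenD(5)[OF d x y])
  also have "\<dots> = op c (op d (op x y))" by (metis CenD(2)[OF d xy xy])
  also have "\<dots> = op (op c d) (op x y)" by (metis CenD(3)[OF c dS xy])
  finally show ?thesis .
qed

lemma Cen_div: assumes c: "c \<in> Cen" and d: "d \<in> Cen" and a: "a \<in> S" and b: "b \<in> S"
  shows "rdiv (op d b) (op c a) = op (op d (cinv c)) (rdiv b a)"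
proof -
  note cS = Cen_S[OF c] and dS = Cen_S[OF d]
  have k: "op d (cinv c) \<in> Cen" using Cen_mult[OF d cinv_Cen[OF c]] .
  note r = rdiv[OF a b]
  have kc: "op (op d (cinv c)) c = d" 
    using CenD(5)[OF c dS cinv(1)[OF c]] cinv(2)[OF c] e_right[OF dS] by metis
  have "op (op (op d (cinv c)) (rdiv b a)) (op c a) = op (op (op d (cinv c)) c) (op (rdiv b a) a)"
    using Cen_prod[OF k c r(1) a] .
  also have "\<dots> = op d b" using kc r(2) by metis
  finally have eq: "op (op (op d (cinv c)) (rdiv b a)) (op c a) = op d b" .
  show ?thesis
    by (rule rdiv_unique[symmetric, OF op_in[OF cS a] op_in[OF dS b] op_in[OF Cen_S[OF k] r(1)] eq])
qed

lemma label_unique: assumes "c \<in> Cen" "d \<in> Cen" "y \<in> S" "op c y = op d y" shows "c = d"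
  by (rule rcancel[OF Cen_S[OF assms(1)] Cen_S[OF assms(2)] assms(3,4)])

lemma Cen_lcancel: assumes "c \<in> Cen" "y \<in> S" "v \<in> S" "op c y = op c v" shows "y = v"
  by (metis cinv_left[OF assms(1,2)] cinv_left[OF assms(1,3)] assms(4))

lemma sub_rl: assumes "A \<subseteq> S" "e \<in> A" "\<And>x y. x \<in> A \<Longrightarrow> y \<in> A \<Longrightarrow> op x y \<in> A"
  "\<And>a b. a \<in> A \<Longrightarrow> b \<in> A \<Longrightarrow> rdiv b a \<in> A"
  shows "right_loop A op e"
  unfolding right_loop_def
proof (intro conjI ballI)
  show "e \<in> A" by fact
  fix x assume x: "x \<in> A"
  show "op e x = x" "op x e = x" using x assms(1) by auto
  fix y assume y: "y \<in> A"
  show "op x y \<in> A" using assms(3) x y .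
next
  fix a b assume a: "a \<in> A" and b: "b \<in> A"
  show "\<exists>!X. X \<in> A \<and> op X a = b"
  proof (rule ex1I[of _ "rdiv b a"])
    show "rdiv b a \<in> A \<and> op (rdiv b a) a = b" using assms(4)[OF a b] rdiv(2) a b assms(1) by auto
    fix X assume "X \<in> A \<and> op X a = b"
    then show "X = rdiv b a" using rdiv_unique a b assms(1) by auto
  qed
qed

lemma sub_rl_D: assumes "A \<subseteq> S" "right_loop A op e" "a \<in> A" "b \<in> A"
  shows "op a b \<in> A" "rdiv b a \<in> A"
proof -
  show "op a b \<in> A" using assms by (simp add: right_loop_def)
  have "\<exists>!X. X \<in> A \<and> op X a = b" using assms(2,3,4) unfolding right_loop_def by blast
  then obtain X where X: "X \<in> A" "op X a = b" by blast
  have "X = rdiv b a" by (rule rdiv_unique) (use assms X in auto)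
  then show "rdiv b a \<in> A" using X by simp
qed

end

lemma prod_rloop: assumes "rloop S op e" shows "rloop (S \<times> S) (prod_op op) (e, e)"
proof -
  interpret rloop S op e by fact
  show ?thesis unfolding rloop_def right_loop_def
  proof (intro conjI ballI)
    show "(e, e) \<in> S \<times> S" using e_in by simp
    fix x assume x: "x \<in> S \<times> S"
    show "prod_op op (e, e) x = x" "prod_op op x (e, e) = x" using x by (auto simp: prod_op_def)
    fix y assume y: "y \<in> S \<times> S"
    show "prod_op op x y \<in> S \<times> S" using x y by (auto simp: prod_op_def)
  next
    fix a b assume a: "a \<in> S \<times> S" and b: "b \<in> S \<times> S"
    show "\<exists>!X. X \<in> S \<times> S \<and> prod_op op X a = b"
    proof (rule ex1I[of _ "(rdiv (fst b) (fst a), rdiv (snd b) (snd a))"])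
      obtain a1 a2 where aa: "a = (a1, a2)" "a1 \<in> S" "a2 \<in> S" using a by auto
      obtain b1 b2 where bb: "b = (b1, b2)" "b1 \<in> S" "b2 \<in> S" using b by auto
      show "(rdiv (fst b) (fst a), rdiv (snd b) (snd a)) \<in> S \<times> S \<and>
        prod_op op (rdiv (fst b) (fst a), rdiv (snd b) (snd a)) a = b"
        using aa bb rdiv[of a1 b1] rdiv[of a2 b2] by (simp add: prod_op_def)
      fix X assume X: "X \<in> S \<times> S \<and> prod_op op X a = b"
      obtain x1 x2 where xx: "X = (x1, x2)" "x1 \<in> S" "x2 \<in> S" using X by auto
      have "op x1 a1 = b1" "op x2 a2 = b2" using X xx aa bb by (auto simp: prod_op_def)
      then show "X = (rdiv (fst b) (fst a), rdiv (snd b) (snd a))"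
        using aa bb xx rdiv_unique[of a1 b1 x1] rdiv_unique[of a2 b2 x2] by simp
    qed
  qed
qed

lemma prod_rdiv: assumes "rloop S op e" "a \<in> S \<times> S" "b \<in> S \<times> S"
  shows "rloop.rdiv (S \<times> S) (prod_op op) b a = (rloop.rdiv S op (fst b) (fst a), rloop.rdiv S op (snd b) (snd a))"
proof -
  interpret rloop S op e by fact
  interpret P: rloop "S \<times> S" "prod_op op" "(e, e)" using prod_rloop[OF assms(1)] .
  show ?thesis
  proof (rule P.rdiv_unique[symmetric])
    show "(rdiv (fst b) (fst a), rdiv (snd b) (snd a)) \<in> S \<times> S"
      using assms(2,3) rdiv(1) by (simp add: mem_Times_iff)
    show "prod_op op (rdiv (fst b) (fst a), rdiv (snd b) (snd a)) a = b"
      using assms(2,3) rdiv(2)[of "fst a" "fst b"] rdiv(2)[of "snd a" "snd b"]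
      by (simp add: prod_op_def mem_Times_iff)
  qed (use assms in auto)
qed

context rloop
begin

definition zeta :: "'a rel" where
  "zeta = {(x, y). x \<in> S \<and> y \<in> S \<and> (\<exists>c\<in>Cen. x = op c y)}"

lemma zetaI: "c \<in> Cen \<Longrightarrow> y \<in> S \<Longrightarrow> (op c y, y) \<in> zeta"
  using Cen_S by (auto simp: zeta_def)

lemma zetaE: assumes "(x, y) \<in> zeta" obtains c where "c \<in> Cen" "y \<in> S" "x = op c y"
  using assms by (auto simp: zeta_def)

lemma zeta_sub: "zeta \<subseteq> S \<times> S" by (auto simp: zeta_def)

lemma zeta_cong: "congruence S op e zeta"
  unfolding congruence_def
proof
  show "equiv S zeta"
  proof (rule equivI)
    show "zeta \<subseteq> S \<times> S" by (rule zeta_sub)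
    show "refl_on S zeta"
    proof (rule refl_onI)
      fix x assume "x \<in> S" then show "(x, x) \<in> zeta" using zetaI[OF e_Cen, of x] by simp
    qed
    show "sym zeta"
    proof (rule symI)
      fix x y assume "(x, y) \<in> zeta"
      then obtain c where c: "c \<in> Cen" "y \<in> S" "x = op c y" by (rule zetaE)
      have yx: "y = op (cinv c) x" using cinv_left[OF c(1,2)] c(3) by simp
      have "x \<in> S" using c Cen_S by simp
      then have "(op (cinv c) x, x) \<in> zeta" by (rule zetaI[OF cinv_Cen[OF c(1)]])
      then show "(y, x) \<in> zeta" using yx by simp
    qed
    show "trans zeta"
    proof (rule transI)
      fix x y z assume "(x, y) \<in> zeta" "(y, z) \<in> zeta"
      then obtain c d where c: "c \<in> Cen" "y \<in> S" "x = op c y" and d: "d \<in> Cen" "z \<in> S" "y = op d z"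
        by (metis zetaE)
      have "x = op (op c d) z" using CenD(3)[OF c(1) Cen_S[OF d(1)] d(2)] c(3) d(3) by simp
      then show "(x, z) \<in> zeta" using zetaI[OF Cen_mult[OF c(1) d(1)] d(2)] by simp
    qed
  qed
next
  interpret P: rloop "S \<times> S" "prod_op op" "(e, e)" by (rule prod_rloop) (rule rloop_axioms)
  show "right_loop zeta (prod_op op) (e, e)"
  proof (rule P.sub_rl)
    show "zeta \<subseteq> S \<times> S" by (rule zeta_sub)
    show "(e, e) \<in> zeta" using zetaI[OF e_Cen e_in] e_in by simp
  next
    fix p q assume p: "p \<in> zeta" and q: "q \<in> zeta"
    obtain x y where pp: "p = (x, y)" by (cases p)
    obtain u v where qq: "q = (u, v)" by (cases q)
    obtain c where c: "c \<in> Cen" "y \<in> S" "x = op c y" using p pp zetaE by blast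
    obtain d where d: "d \<in> Cen" "v \<in> S" "u = op d v" using q qq zetaE by blast
    have "prod_op op p q = (op (op c d) (op y v), op y v)"
      using pp qq c d Cen_prod[OF c(1) d(1) c(2) d(2)] by (simp add: prod_op_def)
    then show "prod_op op p q \<in> zeta" using zetaI[OF Cen_mult[OF c(1) d(1)] op_in[OF c(2) d(2)]] by simp
    have "P.rdiv q p = (rdiv u x, rdiv v y)"
      using prod_rdiv[OF rloop_axioms, of p q] p q zeta_sub pp qq by auto
    also have "\<dots> = (op (op d (cinv c)) (rdiv v y), rdiv v y)"
      using Cen_div[OF c(1) d(1) c(2) d(2)] c(3) d(3) by simp
    finally show "P.rdiv q p \<in> zeta"
      using zetaI[OF Cen_mult[OF d(1) cinv_Cen[OF c(1)]] rdiv(1)[OF c(2) d(2)]] by simp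
  qed
qed

definition Rz :: "('a \<times> 'a) rel" where
  "Rz = {((op c y, y), (op c v, v)) | c y v. c \<in> Cen \<and> y \<in> S \<and> v \<in> S}"

lemma RzI: "c \<in> Cen \<Longrightarrow> y \<in> S \<Longrightarrow> v \<in> S \<Longrightarrow> ((op c y, y), (op c v, v)) \<in> Rz"
  by (auto simp: Rz_def)

lemma RzE: assumes "((x, y), (u, v)) \<in> Rz"
  obtains c where "c \<in> Cen" "y \<in> S" "v \<in> S" "x = op c y" "u = op c v"
  using assms by (auto simp: Rz_def)

lemma Rz_sub: "Rz \<subseteq> zeta \<times> zeta" by (auto simp: Rz_def intro: zetaI)

lemma zeta_central: "centralizes S op e (S \<times> S) zeta"
  unfolding centralizes_def
proof (intro exI[of _ Rz] conjI allI impI ballI)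
  interpret P: rloop "S \<times> S" "prod_op op" "(e, e)" by (rule prod_rloop) (rule rloop_axioms)
  interpret PP: rloop "(S \<times> S) \<times> (S \<times> S)" "prod_op (prod_op op)" "((e, e), (e, e))"
    by (rule prod_rloop) (rule P.rloop_axioms)
  show "congruence zeta (prod_op op) (e, e) Rz"
    unfolding congruence_def
  proof
    show "equiv zeta Rz"
    proof (rule equivI)
      show "Rz \<subseteq> zeta \<times> zeta" by (rule Rz_sub)
      show "refl_on zeta Rz"
      proof (rule refl_onI)
        fix p assume "p \<in> zeta"
        then obtain c y where "c \<in> Cen" "y \<in> S" "p = (op c y, y)" by (cases p) (auto elim: zetaE)
        then show "(p, p) \<in> Rz" using RzI by simp
      qed
      show "sym Rz"
      proof (rule symI)
        fix p q assume "(p, q) \<in> Rz"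
        then obtain c y v where "c \<in> Cen" "y \<in> S" "v \<in> S" "p = (op c y, y)" "q = (op c v, v)"
          by (auto simp: Rz_def)
        then show "(q, p) \<in> Rz" using RzI by simp
      qed
      show "trans Rz"
      proof (rule transI)
        fix p q r assume pq: "(p, q) \<in> Rz" and qr: "(q, r) \<in> Rz"
        obtain c y v where 1: "c \<in> Cen" "y \<in> S" "v \<in> S" "p = (op c y, y)" "q = (op c v, v)"
          using pq by (auto simp: Rz_def)
        obtain d v' w where 2: "d \<in> Cen" "v' \<in> S" "w \<in> S" "q = (op d v', v')" "r = (op d w, w)"
          using qr by (auto simp: Rz_def)
        have "v' = v" using 1 2 by simp
        then have "c = d" using 1 2 label_unique by simp
        then show "(p, r) \<in> Rz" using 1 2 RzI by simp
      qed
    qed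
    show "right_loop Rz (prod_op (prod_op op)) ((e, e), (e, e))"
    proof (rule PP.sub_rl)
      show "Rz \<subseteq> (S \<times> S) \<times> (S \<times> S)" using Rz_sub zeta_sub by blast
      show "((e, e), (e, e)) \<in> Rz" using RzI[OF e_Cen e_in e_in] e_in by simp
    next
      fix A B assume A: "A \<in> Rz" and B: "B \<in> Rz"
      obtain c y v where a: "c \<in> Cen" "y \<in> S" "v \<in> S" "A = ((op c y, y), (op c v, v))"
        using A by (auto simp: Rz_def)
      obtain d y' v' where b: "d \<in> Cen" "y' \<in> S" "v' \<in> S" "B = ((op d y', y'), (op d v', v'))"
        using B by (auto simp: Rz_def)
      have "prod_op (prod_op op) A B =
          ((op (op c d) (op y y'), op y y'), (op (op c d) (op v v'), op v v'))"
        using a b Cen_prod[OF a(1) b(1) a(2) b(2)] Cen_prod[OF a(1) b(1) a(3) b(3)]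
        by (simp add: prod_op_def)
      then show "prod_op (prod_op op) A B \<in> Rz"
        using RzI[OF Cen_mult[OF a(1) b(1)] op_in[OF a(2) b(2)] op_in[OF a(3) b(3)]] by simp
      have AS: "A \<in> (S \<times> S) \<times> (S \<times> S)" and BS: "B \<in> (S \<times> S) \<times> (S \<times> S)"
        using a b Cen_S by auto
      have "PP.rdiv B A = (P.rdiv (fst B) (fst A), P.rdiv (snd B) (snd A))"
        using prod_rdiv[OF P.rloop_axioms AS BS] .
      also have "\<dots> = ((rdiv (op d y') (op c y), rdiv y' y), (rdiv (op d v') (op c v), rdiv v' v))"
        using prod_rdiv[OF rloop_axioms] a b Cen_S by simp
      also have "\<dots> = ((op (op d (cinv c)) (rdiv y' y), rdiv y' y), (op (op d (cinv c)) (rdiv v' v), rdiv v' v))"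
        using Cen_div[OF a(1) b(1) a(2) b(2)] Cen_div[OF a(1) b(1) a(3) b(3)] by simp
      finally show "PP.rdiv B A \<in> Rz"
        using RzI[OF Cen_mult[OF b(1) cinv_Cen[OF a(1)]] rdiv(1)[OF a(2) b(2)] rdiv(1)[OF a(3) b(3)]]
        by simp
    qed
  qed
next
  fix x y u v assume "((x, y), u, v) \<in> Rz"
  then show "(x, u) \<in> S \<times> S" using Cen_S by (auto simp: Rz_def)
next
  fix p assume p: "p \<in> zeta"
  obtain c y where c: "c \<in> Cen" "y \<in> S" "p = (op c y, y)" using p by (cases p) (auto elim: zetaE)
  have img: "Rz `` {p} = (\<lambda>v. (op c v, v)) ` S"
  proof
    show "Rz `` {p} \<subseteq> (\<lambda>v. (op c v, v)) ` S"
    proof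
      fix q assume "q \<in> Rz `` {p}"
      then have "(p, q) \<in> Rz" by simp
      then obtain d y' v where d: "d \<in> Cen" "y' \<in> S" "v \<in> S" "p = (op d y', y')" "q = (op d v, v)"
        by (auto simp: Rz_def)
      have "y' = y" using c d by simp
      then have "d = c" using c d label_unique by simp
      then show "q \<in> (\<lambda>v. (op c v, v)) ` S" using d by auto
    qed
    show "(\<lambda>v. (op c v, v)) ` S \<subseteq> Rz `` {p}" using c RzI by auto
  qed
  have fx: "fst p \<in> S" using c Cen_S by simp
  show "bij_betw fst (Rz `` {p}) ((S \<times> S) `` {fst p})"
    unfolding img bij_betw_def
  proof
    show "inj_on fst ((\<lambda>v. (op c v, v)) ` S)"
      using Cen_lcancel[OF c(1)] by (auto simp: inj_on_def)
    have "fst ` (\<lambda>v. (op c v, v)) ` S = S"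
    proof
      show "fst ` (\<lambda>v. (op c v, v)) ` S \<subseteq> S" using c Cen_S by auto
      show "S \<subseteq> fst ` (\<lambda>v. (op c v, v)) ` S"
      proof
        fix u assume u: "u \<in> S"
        have "u = op c (op (cinv c) u)" using cinv_right[OF c(1) u] by simp
        moreover have "op (cinv c) u \<in> S" using cinv(1)[OF c(1)] u by simp
        ultimately show "u \<in> fst ` (\<lambda>v. (op c v, v)) ` S" by force
      qed
    qed
    then show "fst ` (\<lambda>v. (op c v, v)) ` S = (S \<times> S) `` {fst p}" using fx by auto
  qed
next
  fix x y assume "(x, y) \<in> S \<times> S"
  then show "((x, x), y, y) \<in> Rz" using RzI[OF e_Cen, of x y] by simp
next
  fix x y u v assume "((x, y), u, v) \<in> Rz"
  then obtain c where c: "c \<in> Cen" "y \<in> S" "v \<in> S" "x = op c y" "u = op c v" by (rule RzE)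
  have yx: "y = op (cinv c) x" "v = op (cinv c) u" using cinv_left c by auto
  have "x \<in> S" "u \<in> S" using c Cen_S by auto
  then have "((op (cinv c) x, x), op (cinv c) u, u) \<in> Rz" by (rule RzI[OF cinv_Cen[OF c(1)]])
  then show "((y, x), v, u) \<in> Rz" using yx by simp
next
  fix x y z u v w assume 1: "((x, y), u, v) \<in> Rz" and 2: "((y, z), v, w) \<in> Rz"
  obtain c where c: "c \<in> Cen" "y \<in> S" "v \<in> S" "x = op c y" "u = op c v" using 1 by (rule RzE)
  obtain d where d: "d \<in> Cen" "z \<in> S" "w \<in> S" "y = op d z" "v = op d w" using 2 by (rule RzE)
  have "x = op (op c d) z" "u = op (op c d) w"
    using CenD(3)[OF c(1) Cen_S[OF d(1)] d(2)] CenD(3)[OF c(1) Cen_S[OF d(1)] d(3)] c d by simp_all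
  then show "((x, z), u, w) \<in> Rz" using RzI[OF Cen_mult[OF c(1) d(1)] d(2,3)] by simp
qed

end

context rloop
begin

lemma rdiv_self: "y \<in> S \<Longrightarrow> rdiv y y = e"
  using rdiv_unique[of y y e] e_in by simp

lemma rdiv_op: "x \<in> S \<Longrightarrow> a \<in> S \<Longrightarrow> rdiv (op x a) a = x"
  using rdiv_unique[of a "op x a" x] by simp

lemma cong_sub: "congruence S op e \<alpha> \<Longrightarrow> \<alpha> \<subseteq> S \<times> S"
  by (auto simp: congruence_def equiv_def)

lemma cong_refl: "congruence S op e \<alpha> \<Longrightarrow> x \<in> S \<Longrightarrow> (x, x) \<in> \<alpha>"
  by (auto simp: congruence_def equiv_def refl_on_def)

lemma cong_sym: "congruence S op e \<alpha> \<Longrightarrow> (x, y) \<in> \<alpha> \<Longrightarrow> (y, x) \<in> \<alpha>"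
  by (auto simp: congruence_def equiv_def sym_def)

lemma cong_trans: "congruence S op e \<alpha> \<Longrightarrow> (x, y) \<in> \<alpha> \<Longrightarrow> (y, z) \<in> \<alpha> \<Longrightarrow> (x, z) \<in> \<alpha>"
  unfolding congruence_def equiv_def trans_def by blast

lemma cong_op: assumes "congruence S op e \<alpha>" "(x, y) \<in> \<alpha>" "(u, v) \<in> \<alpha>"
  shows "(op x u, op y v) \<in> \<alpha>"
proof -
  have "prod_op op (x, y) (u, v) \<in> \<alpha>" using assms by (simp add: congruence_def right_loop_def)
  then show ?thesis by (simp add: prod_op_def)
qed

lemma cong_rdiv: assumes A: "congruence S op e \<alpha>" and "(x, y) \<in> \<alpha>" "(u, v) \<in> \<alpha>"
  shows "(rdiv x u, rdiv y v) \<in> \<alpha>"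
proof -
  interpret P: rloop "S \<times> S" "prod_op op" "(e, e)" by (rule prod_rloop) (rule rloop_axioms)
  have sub: "\<alpha> \<subseteq> S \<times> S" using cong_sub[OF A] .
  have "P.rdiv (x, y) (u, v) \<in> \<alpha>"
    using P.sub_rl_D(2)[OF sub _ assms(3) assms(2)] A by (simp add: congruence_def)
  moreover have "P.rdiv (x, y) (u, v) = (rdiv x u, rdiv y v)"
    using prod_rdiv[OF rloop_axioms, of "(u, v)" "(x, y)"] assms sub by auto
  ultimately show ?thesis by simp
qed

lemma cong_cancel: assumes A: "congruence S op e \<alpha>" and "X \<in> S" "Y \<in> S" "a \<in> S"
  and "(op X a, op Y a) \<in> \<alpha>" shows "(X, Y) \<in> \<alpha>"
  using cong_rdiv[OF A assms(5) cong_refl[OF A assms(4)]] rdiv_op assms(2-4) by simp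

lemma cong_char: assumes A: "congruence S op e \<alpha>" and x: "x \<in> S" and y: "y \<in> S"
  shows "(x, y) \<in> \<alpha> \<longleftrightarrow> (e, rdiv x y) \<in> \<alpha>"
proof
  assume "(x, y) \<in> \<alpha>"
  from cong_rdiv[OF A this cong_refl[OF A y]] show "(e, rdiv x y) \<in> \<alpha>"
    using rdiv_self[OF y] cong_sym[OF A] by simp
next
  assume "(e, rdiv x y) \<in> \<alpha>"
  from cong_op[OF A cong_sym[OF A this] cong_refl[OF A y]] show "(x, y) \<in> \<alpha>"
    using rdiv[OF y x] y by simp
qed

lemma cong_eq: assumes A: "congruence S op e \<alpha>" and B: "congruence S op e \<beta>"
  and eq: "\<alpha> `` {e} = \<beta> `` {e}" shows "\<alpha> = \<beta>"
proof -
  have "(x, y) \<in> \<alpha> \<longleftrightarrow> (x, y) \<in> \<beta>" for x y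
  proof (cases "x \<in> S \<and> y \<in> S")
    case True
    have "(e, rdiv x y) \<in> \<alpha> \<longleftrightarrow> (e, rdiv x y) \<in> \<beta>" using eq by blast
    then show ?thesis using cong_char[OF A] cong_char[OF B] True by simp
  next
    case False
    then show ?thesis using cong_sub[OF A] cong_sub[OF B] by auto
  qed
  then show ?thesis by auto
qed

lemma inv_cong_eq: assumes "congruence S op e \<alpha>" shows "inv_cong S op e (\<alpha> `` {e}) = \<alpha>"
  unfolding inv_cong_def
  by (rule the_equality) (use assms cong_eq in auto)

lemma central_sub_zeta: assumes B: "congruence S op e \<beta>" and C: "centralizes S op e (S \<times> S) \<beta>"
  shows "\<beta> \<subseteq> zeta"
proof
  interpret P: rloop "S \<times> S" "prod_op op" "(e, e)" by (rule prod_rloop) (rule rloop_axioms)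
  obtain R where Rc: "congruence \<beta> (prod_op op) (e, e) R"
    and R2: "\<forall>p\<in>\<beta>. bij_betw fst (R `` {p}) ((S \<times> S) `` {fst p})"
    and R3: "\<forall>x y. (x, y) \<in> S \<times> S \<longrightarrow> ((x, x), (y, y)) \<in> R"
    and R4: "\<forall>x y u v. ((x, y), (u, v)) \<in> R \<longrightarrow> ((y, x), (v, u)) \<in> R"
    using C unfolding centralizes_def by blast
  have Req: "equiv \<beta> R" and Rrl: "right_loop R (prod_op (prod_op op)) ((e, e), (e, e))"
    using Rc by (auto simp: congruence_def)
  have Rmul: "((op a a', op b b'), (op c c', op d d')) \<in> R"
    if "((a, b), (c, d)) \<in> R" "((a', b'), (c', d')) \<in> R" for a b c d a' b' c' d'
  proof -
    have "prod_op (prod_op op) ((a, b), (c, d)) ((a', b'), (c', d')) \<in> R"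
      using Rrl that by (simp add: right_loop_def)
    then show ?thesis by (simp add: prod_op_def)
  qed
  have Rsym: "(q, p) \<in> R" if "(p, q) \<in> R" for p q
    using Req that unfolding equiv_def sym_def by (cases p, cases q) blast
  have Rrefl: "(p, p) \<in> R" if "p \<in> \<beta>" for p
    using Req that by (auto simp: equiv_def refl_on_def)
  fix p assume p: "p \<in> \<beta>"
  obtain x y where pxy: "p = (x, y)" by (cases p)
  have xy: "x \<in> S" "y \<in> S" using p pxy cong_sub[OF B] by auto
  define c where "c = rdiv x y"
  have cS: "c \<in> S" and cy: "op c y = x" using rdiv[OF xy(2,1)] by (auto simp: c_def)
  have ce: "(c, e) \<in> \<beta>"
    using cong_rdiv[OF B _ cong_refl[OF B xy(2)], of x y] p pxy rdiv_self[OF xy(2)] by (simp add: c_def)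
  have ec: "(e, c) \<in> \<beta>" using cong_sym[OF B ce] .
  have inj: "inj_on fst (R `` {(e, c)})" using R2 ec by (auto simp: bij_betw_def)
  have key: "a = b" if a: "((a, w), (c, e)) \<in> R" and b: "((b, w), (c, e)) \<in> R" for a b w
  proof -
    have "((w, a), (e, c)) \<in> R" "((w, b), (e, c)) \<in> R" using R4 a b by auto
    then have "(w, a) \<in> R `` {(e, c)}" "(w, b) \<in> R `` {(e, c)}" using Rsym by auto
    then have "(w, a) = (w, b)" using inj[unfolded inj_on_def] by (metis fst_conv)
    then show ?thesis by simp
  qed
  have Rcc: "((c, e), (c, e)) \<in> R" using Rrefl[OF ce] .
  have Rd: "((z, z), (e, e)) \<in> R" if "z \<in> S" for z using R3 that e_in by auto
  have eS: "e \<in> S" by (rule e_in)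
  have "c \<in> Cen" unfolding Cen_def
  proof (intro CollectI conjI ballI)
    show "c \<in> S" by fact
    fix u v assume u: "u \<in> S" and v: "v \<in> S"
    have uv: "op u v \<in> S" using u v by simp
    have 1: "((op c u, u), (c, e)) \<in> R" using Rmul[OF Rcc Rd[OF u]] u cS eS by simp
    have 2: "((op u c, u), (c, e)) \<in> R" using Rmul[OF Rd[OF u] Rcc] u cS eS by simp
    show "op c u = op u c" using key[OF 1 2] .
    have 3: "((op (op c u) v, op u v), (c, e)) \<in> R" using Rmul[OF 1 Rd[OF v]] cS eS by simp
    have 4: "((op c (op u v), op u v), (c, e)) \<in> R" using Rmul[OF Rcc Rd[OF uv]] cS uv eS by simp
    show "op (op c u) v = op c (op u v)" using key[OF 3 4] .
    have 5: "((op (op u c) v, op u v), (c, e)) \<in> R" using Rmul[OF 2 Rd[OF v]] cS eS by simp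
    have 6: "((op c v, v), (c, e)) \<in> R" using Rmul[OF Rcc Rd[OF v]] cS v eS by simp
    have 7: "((op u (op c v), op u v), (c, e)) \<in> R" using Rmul[OF Rd[OF u] 6] cS eS by simp
    show "op (op u c) v = op u (op c v)" using key[OF 5 7] .
    have 8: "((op (op u v) c, op u v), (c, e)) \<in> R" using Rmul[OF Rd[OF uv] Rcc] cS uv eS by simp
    have 9: "((op v c, v), (c, e)) \<in> R" using Rmul[OF Rd[OF v] Rcc] cS v eS by simp
    have 10: "((op u (op v c), op u v), (c, e)) \<in> R" using Rmul[OF Rd[OF u] 9] cS eS by simp
    show "op (op u v) c = op u (op v c)" using key[OF 8 10] .
  qed
  then have "(op c y, y) \<in> zeta" using zetaI xy by simp
  then show "p \<in> zeta" using pxy cy by simp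
qed

lemma center_cong_eq: "center_cong S op e = zeta"
  unfolding center_cong_def
proof (rule the_equality)
  show "congruence S op e zeta \<and> centralizes S op e (S \<times> S) zeta \<and>
    (\<forall>\<beta>'. congruence S op e \<beta>' \<and> centralizes S op e (S \<times> S) \<beta>' \<and> zeta \<subseteq> \<beta>' \<longrightarrow> \<beta>' = zeta)"
    using zeta_cong zeta_central central_sub_zeta by blast
  fix \<beta> assume "congruence S op e \<beta> \<and> centralizes S op e (S \<times> S) \<beta> \<and>
    (\<forall>\<beta>'. congruence S op e \<beta>' \<and> centralizes S op e (S \<times> S) \<beta>' \<and> \<beta> \<subseteq> \<beta>' \<longrightarrow> \<beta>' = \<beta>)"
  then show "\<beta> = zeta" using zeta_cong zeta_central central_sub_zeta by metis
qed

lemma center_eq: "center S op e = Cen"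
proof -
  have "zeta `` {e} = Cen"
  proof
    show "zeta `` {e} \<subseteq> Cen"
    proof
      fix y assume "y \<in> zeta `` {e}"
      then have "(e, y) \<in> zeta" by simp
      then obtain c where c: "c \<in> Cen" "y \<in> S" "e = op c y" by (rule zetaE)
      have "y = op (cinv c) e" using cinv_left[OF c(1,2)] c(3) by simp
      also have "\<dots> = cinv c" using cinv(1)[OF c(1)] by simp
      finally show "y \<in> Cen" using cinv_Cen[OF c(1)] by simp
    qed
    show "Cen \<subseteq> zeta `` {e}"
    proof
      fix y assume y: "y \<in> Cen"
      have "(op (cinv y) y, y) \<in> zeta" using zetaI[OF cinv_Cen[OF y] Cen_S[OF y]] .
      then show "y \<in> zeta `` {e}" using cinv(2)[OF y] by simp
    qed
  qed
  then show ?thesis by (simp add: center_def center_cong_eq)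
qed

end

definition centralmod :: "'a set \<Rightarrow> ('a \<Rightarrow> 'a \<Rightarrow> 'a) \<Rightarrow> 'a rel \<Rightarrow> 'a \<Rightarrow> bool" where
  "centralmod S op \<alpha> c \<longleftrightarrow> (\<forall>x\<in>S. \<forall>y\<in>S. (op c x, op x c) \<in> \<alpha> \<and> (op (op c x) y, op c (op x y)) \<in> \<alpha>
     \<and> (op (op x c) y, op x (op c y)) \<in> \<alpha> \<and> (op (op x y) c, op x (op y c)) \<in> \<alpha>)"

locale rcong = rloop +
  fixes \<alpha> :: "'a rel"
  assumes CG: "congruence S op e \<alpha>"
begin

abbreviation cls :: "'a \<Rightarrow> 'a set" where "cls x \<equiv> \<alpha> `` {x}"
abbreviation qop :: "'a set \<Rightarrow> 'a set \<Rightarrow> 'a set" where "qop \<equiv> quot_op op \<alpha>"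

lemma EQ: "equiv S \<alpha>" using CG by (simp add: congruence_def)

lemma cls_in: "x \<in> S \<Longrightarrow> cls x \<in> S // \<alpha>" by (simp add: quotientI)

lemma cls_self: "x \<in> S \<Longrightarrow> x \<in> cls x" using cong_refl[OF CG] by simp

lemma cls_eq: "x \<in> S \<Longrightarrow> y \<in> S \<Longrightarrow> cls x = cls y \<longleftrightarrow> (x, y) \<in> \<alpha>"
  using eq_equiv_class_iff[OF EQ] by simp

lemma Q_elem: assumes "A \<in> S // \<alpha>" obtains x where "x \<in> S" "A = cls x"
  using assms by (auto simp: quotient_def)

lemma mem_cls: assumes "x \<in> cls a" "a \<in> S" shows "cls x = cls a" "x \<in> S"
proof -
  have "(a, x) \<in> \<alpha>" using assms by simp
  then show "x \<in> S" using cong_sub[OF CG] by auto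
  show "cls x = cls a" using \<open>(a, x) \<in> \<alpha>\<close> cls_eq assms cong_sym[OF CG] \<open>x \<in> S\<close> by blast
qed

lemma qop_cls: assumes x: "x \<in> S" and y: "y \<in> S" shows "qop (cls x) (cls y) = cls (op x y)"
proof -
  define a where "a = (SOME a. a \<in> cls x)"
  define b where "b = (SOME b. b \<in> cls y)"
  have a: "a \<in> cls x" unfolding a_def by (rule someI[of _ x]) (rule cls_self[OF x])
  have b: "b \<in> cls y" unfolding b_def by (rule someI[of _ y]) (rule cls_self[OF y])
  have aS: "a \<in> S" using mem_cls(2)[OF a x] .
  have bS: "b \<in> S" using mem_cls(2)[OF b y] .
  have "(x, a) \<in> \<alpha>" "(y, b) \<in> \<alpha>" using a b by auto
  then have "(op x y, op a b) \<in> \<alpha>" by (rule cong_op[OF CG])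
  then have 1: "cls (op a b) = cls (op x y)"
    using iffD2[OF cls_eq[OF op_in[OF aS bS] op_in[OF x y]]] cong_sym[OF CG] by blast
  have 2: "qop (cls x) (cls y) = cls (op a b)" unfolding quot_op_def a_def b_def ..
  show ?thesis using 1 2 by simp
qed

lemma quot_rloop: "rloop (S // \<alpha>) qop (cls e)"
  unfolding rloop_def right_loop_def
proof (intro conjI ballI)
  show "cls e \<in> S // \<alpha>" using cls_in e_in .
  fix A assume "A \<in> S // \<alpha>"
  then obtain x where x: "x \<in> S" "A = cls x" by (rule Q_elem)
  show "qop (cls e) A = A" unfolding x(2) qop_cls[OF e_in x(1)] e_left[OF x(1)] ..
  show "qop A (cls e) = A" unfolding x(2) qop_cls[OF x(1) e_in] e_right[OF x(1)] ..
  fix B assume "B \<in> S // \<alpha>"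
  then obtain y where y: "y \<in> S" "B = cls y" by (rule Q_elem)
  show "qop A B \<in> S // \<alpha>" unfolding x(2) y(2) qop_cls[OF x(1) y(1)] by (rule cls_in) (use x y in simp)
next
  fix A B assume "A \<in> S // \<alpha>" "B \<in> S // \<alpha>"
  then obtain a b where a: "a \<in> S" "A = cls a" and b: "b \<in> S" "B = cls b" by (metis Q_elem)
  note r = rdiv[OF a(1) b(1)]
  show "\<exists>!X. X \<in> S // \<alpha> \<and> qop X A = B"
  proof (rule ex1I[of _ "cls (rdiv b a)"])
    show "cls (rdiv b a) \<in> S // \<alpha> \<and> qop (cls (rdiv b a)) A = B"
      unfolding a(2) b(2) qop_cls[OF r(1) a(1)] r(2) using cls_in[OF r(1)] by simp
    fix X assume X: "X \<in> S // \<alpha> \<and> qop X A = B"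
    then obtain x where x: "x \<in> S" "X = cls x" by (metis Q_elem)
    have "cls (op x a) = cls (op (rdiv b a) a)" using X unfolding x(2) a(2) b(2) qop_cls[OF x(1) a(1)] r(2) by simp
    then have "(op x a, op (rdiv b a) a) \<in> \<alpha>" using cls_eq[OF op_in[OF x(1) a(1)] op_in[OF r(1) a(1)]] by blast
    then have "(x, rdiv b a) \<in> \<alpha>" by (rule cong_cancel[OF CG x(1) r(1) a(1)])
    then show "X = cls (rdiv b a)" unfolding x(2) using cls_eq[OF x(1) r(1)] by blast
  qed
qed

sublocale Q: rloop "S // \<alpha>" qop "cls e" by (rule quot_rloop)

lemma Q_rdiv: "x \<in> S \<Longrightarrow> y \<in> S \<Longrightarrow> Q.rdiv (cls x) (cls y) = cls (rdiv x y)"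
  by (rule Q.rdiv_unique[symmetric]) (use cls_in rdiv[of y x] qop_cls in auto)

lemma Q_Cen: assumes c: "c \<in> S" shows "cls c \<in> Q.Cen \<longleftrightarrow> centralmod S op \<alpha> c"
proof
  assume C: "cls c \<in> Q.Cen"
  show "centralmod S op \<alpha> c" unfolding centralmod_def
  proof (intro ballI conjI)
    fix x y assume x: "x \<in> S" and y: "y \<in> S"
    note D = Q.CenD[OF C cls_in[OF x] cls_in[OF y]]
    have cx: "op c x \<in> S" "op x c \<in> S" "op x y \<in> S" "op c y \<in> S" "op y c \<in> S" using c x y by auto
    have cy: "op (op c x) y \<in> S" "op c (op x y) \<in> S" "op (op x c) y \<in> S" "op x (op c y) \<in> S"
      "op (op x y) c \<in> S" "op x (op y c) \<in> S" using c x y by auto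
    have "cls (op c x) = cls (op x c)" using D(2) unfolding qop_cls[OF c x] qop_cls[OF x c] .
    then show "(op c x, op x c) \<in> \<alpha>" using cls_eq[OF cx(1,2)] by blast
    have "cls (op (op c x) y) = cls (op c (op x y))" using D(3)
      unfolding qop_cls[OF c x] qop_cls[OF cx(1) y] qop_cls[OF x y] qop_cls[OF c cx(3)] .
    then show "(op (op c x) y, op c (op x y)) \<in> \<alpha>" using cls_eq[OF cy(1,2)] by blast
    have "cls (op (op x c) y) = cls (op x (op c y))" using D(4)
      unfolding qop_cls[OF x c] qop_cls[OF cx(2) y] qop_cls[OF c y] qop_cls[OF x cx(4)] .
    then show "(op (op x c) y, op x (op c y)) \<in> \<alpha>" using cls_eq[OF cy(3,4)] by blast
    have "cls (op (op x y) c) = cls (op x (op y c))" using D(5)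
      unfolding qop_cls[OF x y] qop_cls[OF cx(3) c] qop_cls[OF y c] qop_cls[OF x cx(5)] .
    then show "(op (op x y) c, op x (op y c)) \<in> \<alpha>" using cls_eq[OF cy(5,6)] by blast
  qed
next
  assume C: "centralmod S op \<alpha> c"
  show "cls c \<in> Q.Cen" unfolding Q.Cen_def
  proof (intro CollectI conjI ballI)
    show "cls c \<in> S // \<alpha>" using cls_in[OF c] .
    fix X Y assume "X \<in> S // \<alpha>" "Y \<in> S // \<alpha>"
    then obtain x y where x: "x \<in> S" "X = cls x" and y: "y \<in> S" "Y = cls y" by (metis Q_elem)
    have cx: "op c x \<in> S" "op x c \<in> S" "op x y \<in> S" "op c y \<in> S" "op y c \<in> S" using c x y by auto
    have cy: "op (op c x) y \<in> S" "op c (op x y) \<in> S" "op (op x c) y \<in> S" "op x (op c y) \<in> S"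
      "op (op x y) c \<in> S" "op x (op y c) \<in> S" using c x y by auto
    have a: "(op c x, op x c) \<in> \<alpha>" "(op (op c x) y, op c (op x y)) \<in> \<alpha>"
      "(op (op x c) y, op x (op c y)) \<in> \<alpha>" "(op (op x y) c, op x (op y c)) \<in> \<alpha>"
      using C x(1) y(1) unfolding centralmod_def by blast+
    show "qop (cls c) X = qop X (cls c)"
      unfolding x(2) qop_cls[OF c x(1)] qop_cls[OF x(1) c] using cls_eq[OF cx(1,2)] a(1) by blast
    show "qop (qop (cls c) X) Y = qop (cls c) (qop X Y)"
      unfolding x(2) y(2) qop_cls[OF c x(1)] qop_cls[OF cx(1) y(1)] qop_cls[OF x(1) y(1)] qop_cls[OF c cx(3)]
      using cls_eq[OF cy(1,2)] a(2) by blast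
    show "qop (qop X (cls c)) Y = qop X (qop (cls c) Y)"
      unfolding x(2) y(2) qop_cls[OF x(1) c] qop_cls[OF cx(2) y(1)] qop_cls[OF c y(1)] qop_cls[OF x(1) cx(4)]
      using cls_eq[OF cy(3,4)] a(3) by blast
    show "qop (qop X Y) (cls c) = qop X (qop Y (cls c))"
      unfolding x(2) y(2) qop_cls[OF x(1) y(1)] qop_cls[OF cx(3) c] qop_cls[OF y(1) c] qop_cls[OF x(1) cx(5)]
      using cls_eq[OF cy(5,6)] a(4) by blast
  qed
qed

lemma Union_Cen: "\<Union> Q.Cen = {c \<in> S. centralmod S op \<alpha> c}"
proof
  show "\<Union> Q.Cen \<subseteq> {c \<in> S. centralmod S op \<alpha> c}"
  proof
    fix x assume "x \<in> \<Union> Q.Cen"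
    then obtain A where A: "A \<in> Q.Cen" "x \<in> A" by blast
    have "A \<in> S // \<alpha>" using A Q.Cen_S by simp
    then obtain a where a: "a \<in> S" "A = cls a" by (rule Q_elem)
    have xa: "cls x = cls a" "x \<in> S" using mem_cls A a by auto
    then have "cls x \<in> Q.Cen" using A a by simp
    then have "centralmod S op \<alpha> x" using Q_Cen[OF xa(2)] by blast
    then show "x \<in> {c \<in> S. centralmod S op \<alpha> c}" using xa by blast
  qed
  show "{c \<in> S. centralmod S op \<alpha> c} \<subseteq> \<Union> Q.Cen"
    using Q_Cen cls_self by blast
qed

definition beta :: "'a rel" where
  "beta = {(x, y). x \<in> S \<and> y \<in> S \<and> (cls x, cls y) \<in> Q.zeta}"

lemma beta_cong: "congruence S op e beta"
  unfolding congruence_def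
proof
  note ZC = Q.zeta_cong
  show "equiv S beta"
  proof (rule equivI)
    show "beta \<subseteq> S \<times> S" by (auto simp: beta_def)
    show "refl_on S beta" by (rule refl_onI) (auto simp: beta_def intro: Q.cong_refl[OF ZC] cls_in)
    show "sym beta"
    proof (rule symI)
      fix x y assume "(x, y) \<in> beta"
      then have h: "x \<in> S" "y \<in> S" "(cls x, cls y) \<in> Q.zeta" by (auto simp: beta_def)
      have "(cls y, cls x) \<in> Q.zeta" by (rule Q.cong_sym[OF ZC h(3)])
      then show "(y, x) \<in> beta" using h(1,2) by (simp add: beta_def)
    qed
    show "trans beta"
    proof (rule transI)
      fix x y z assume "(x, y) \<in> beta" "(y, z) \<in> beta"
      then have h: "x \<in> S" "z \<in> S" "(cls x, cls y) \<in> Q.zeta" "(cls y, cls z) \<in> Q.zeta"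
        by (auto simp: beta_def)
      have "(cls x, cls z) \<in> Q.zeta" by (rule Q.cong_trans[OF ZC h(3,4)])
      then show "(x, z) \<in> beta" using h(1,2) by (simp add: beta_def)
    qed
  qed
next
  interpret P: rloop "S \<times> S" "prod_op op" "(e, e)" by (rule prod_rloop) (rule rloop_axioms)
  note ZC = Q.zeta_cong
  show "right_loop beta (prod_op op) (e, e)"
  proof (rule P.sub_rl)
    show "beta \<subseteq> S \<times> S" by (auto simp: beta_def)
    show "(e, e) \<in> beta" using e_in Q.cong_refl[OF ZC] cls_in by (auto simp: beta_def)
  next
    fix p q assume p: "p \<in> beta" and q: "q \<in> beta"
    obtain x y where pp: "p = (x, y)" "x \<in> S" "y \<in> S" "(cls x, cls y) \<in> Q.zeta"
      using p by (auto simp: beta_def)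
    obtain u v where qq: "q = (u, v)" "u \<in> S" "v \<in> S" "(cls u, cls v) \<in> Q.zeta"
      using q by (auto simp: beta_def)
    have "(qop (cls x) (cls u), qop (cls y) (cls v)) \<in> Q.zeta"
      using Q.cong_op[OF ZC pp(4) qq(4)] .
    then show "prod_op op p q \<in> beta" using pp qq qop_cls by (simp add: beta_def prod_op_def)
    have "(Q.rdiv (cls u) (cls x), Q.rdiv (cls v) (cls y)) \<in> Q.zeta"
      using Q.cong_rdiv[OF ZC qq(4) pp(4)] .
    then have "(cls (rdiv u x), cls (rdiv v y)) \<in> Q.zeta" using Q_rdiv pp qq by simp
    moreover have "P.rdiv q p = (rdiv u x, rdiv v y)"
      using prod_rdiv[OF rloop_axioms, of p q] pp qq by simp
    ultimately show "P.rdiv q p \<in> beta" using pp qq rdiv by (simp add: beta_def)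
  qed
qed

lemma beta_class: "beta `` {e} = \<Union> (center (S // \<alpha>) qop (cls e))"
proof -
  have "\<Union> (center (S // \<alpha>) qop (cls e)) = {c \<in> S. centralmod S op \<alpha> c}"
    using Q.center_eq Union_Cen by simp
  also have "\<dots> = beta `` {e}"
  proof -
    have "y \<in> beta `` {e} \<longleftrightarrow> y \<in> S \<and> cls y \<in> Q.zeta `` {cls e}" for y
      using e_in by (auto simp: beta_def)
    moreover have "Q.zeta `` {cls e} = Q.Cen"
      using Q.center_eq Q.center_cong_eq by (simp add: center_def)
    ultimately show ?thesis using Q_Cen by auto
  qed
  finally show ?thesis by simp
qed

end

context rloop
begin

lemma upper_invariant: "\<exists>\<alpha>. congruence S op e \<alpha> \<and> \<alpha> `` {e} = upper_central S op e i"
proof (induction i)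
  case 0
  have "congruence S op e (Id_on S)"
    unfolding congruence_def
  proof
    show "equiv S (Id_on S)" by (rule equivI) (auto simp: refl_on_def sym_def trans_def)
    interpret P: rloop "S \<times> S" "prod_op op" "(e, e)" by (rule prod_rloop) (rule rloop_axioms)
    show "right_loop (Id_on S) (prod_op op) (e, e)"
    proof (rule P.sub_rl)
      fix p q assume "p \<in> Id_on S" "q \<in> Id_on S"
      then obtain x u where "p = (x, x)" "q = (u, u)" "x \<in> S" "u \<in> S" by auto
      then show "prod_op op p q \<in> Id_on S" "P.rdiv q p \<in> Id_on S"
        using prod_rdiv[OF rloop_axioms, of p q] rdiv by (auto simp: prod_op_def)
    qed (use e_in in auto)
  qed
  then show ?case using e_in by auto
next
  case (Suc i)
  then obtain \<alpha> where A: "congruence S op e \<alpha>" "\<alpha> `` {e} = upper_central S op e i" by blast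
  interpret rcong S op e \<alpha> by unfold_locales (rule A(1))
  have "inv_cong S op e (upper_central S op e i) = \<alpha>" using inv_cong_eq[OF A(1)] A(2) by simp
  then have "upper_central S op e (Suc i) = beta `` {e}" using beta_class by (simp add: Let_def)
  then show ?case using beta_cong by blast
qed

lemma upper_central_Suc: assumes "congruence S op e \<alpha>" "\<alpha> `` {e} = upper_central S op e i"
  shows "upper_central S op e (Suc i) = {c \<in> S. centralmod S op \<alpha> c}"
proof -
  interpret rcong S op e \<alpha> by unfold_locales (rule assms(1))
  have "inv_cong S op e (upper_central S op e i) = \<alpha>" using inv_cong_eq[OF assms(1)] assms(2) by simp
  then show ?thesis using Q.center_eq Union_Cen by (simp add: Let_def)
qed

end

context rloop
begin

abbreviation gens :: "('a \<Rightarrow> 'a) set" where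
  "gens \<equiv> {torsion_map S op y z | y z. y \<in> S \<and> z \<in> S}"

lemma tm_val: "x \<in> S \<Longrightarrow> torsion_map S op y z x = rdiv (op (op x y) z) (op y z)"
  by (simp add: torsion_map_def rdiv_def)

lemma tm_props: assumes y: "y \<in> S" and z: "z \<in> S" and x: "x \<in> S"
  shows "torsion_map S op y z x \<in> S" "op (torsion_map S op y z x) (op y z) = op (op x y) z"
  using rdiv[of "op y z" "op (op x y) z"] tm_val[OF x] x y z by auto

lemma tm_Bij: assumes y: "y \<in> S" and z: "z \<in> S" shows "torsion_map S op y z \<in> Bij S"
proof -
  let ?t = "torsion_map S op y z"
  have ext: "?t \<in> extensional S" by (simp add: torsion_map_def)
  have inj: "inj_on ?t S"
  proof (rule inj_onI)
    fix x x' assume x: "x \<in> S" and x': "x' \<in> S" and eq: "?t x = ?t x'"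
    have "op (op x y) z = op (op x' y) z" using tm_props(2)[OF y z x] tm_props(2)[OF y z x'] eq by simp
    then have "op x y = op x' y" using rcancel[OF op_in[OF x y] op_in[OF x' y] z] by simp
    then show "x = x'" using rcancel[OF x x' y] by simp
  qed
  have surj: "?t ` S = S"
  proof
    show "?t ` S \<subseteq> S" using tm_props(1)[OF y z] by auto
    show "S \<subseteq> ?t ` S"
    proof
      fix w assume w: "w \<in> S"
      define u where "u = rdiv (op w (op y z)) z"
      have u: "u \<in> S" "op u z = op w (op y z)" using rdiv[OF z op_in[OF w op_in[OF y z]]] by (auto simp: u_def)
      define x where "x = rdiv u y"
      have x: "x \<in> S" "op x y = u" using rdiv[OF y u(1)] by (auto simp: x_def)
      have "op (?t x) (op y z) = op w (op y z)" using tm_props(2)[OF y z x(1)] x u by simp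
      then have "?t x = w" using rcancel[OF tm_props(1)[OF y z x(1)] w op_in[OF y z]] by simp
      then show "w \<in> ?t ` S" using x by force
    qed
  qed
  show ?thesis using ext inj surj by (simp add: Bij_def bij_betw_def)
qed

lemma gens_sub: "gens \<subseteq> carrier (BijGroup S)"
  using tm_Bij by (auto simp: BijGroup_def)

lemma Bij_S: "g \<in> Bij S \<Longrightarrow> x \<in> S \<Longrightarrow> g x \<in> S"
  using Bij_imp_funcset by blast

lemma GS_props:
  assumes A: "congruence S op e \<alpha>" and g: "g \<in> generate (BijGroup S) gens"
  shows "g \<in> Bij S \<and> (\<forall>x y. (x, y) \<in> \<alpha> \<longrightarrow> (g x, g y) \<in> \<alpha>) \<and>
     (\<forall>c x. c \<in> S \<and> centralmod S op \<alpha> c \<and> x \<in> S \<longrightarrow> (g (op c x), op c (g x)) \<in> \<alpha>)"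
  using g
proof (induction rule: generate.induct)
  case one
  have o: "\<one>\<^bsub>BijGroup S\<^esub> = (\<lambda>x\<in>S. x)" by (simp add: BijGroup_def)
  have B: "(\<lambda>x\<in>S. x) \<in> Bij S" by (rule id_Bij)
  have P: "((\<lambda>x\<in>S. x) x, (\<lambda>x\<in>S. x) y) \<in> \<alpha>" if "(x, y) \<in> \<alpha>" for x y
    using that cong_sub[OF A] by auto
  have C: "((\<lambda>x\<in>S. x) (op c x), op c ((\<lambda>x\<in>S. x) x)) \<in> \<alpha>" if "c \<in> S" "x \<in> S" for c x
    using that cong_refl[OF A] by simp
  show ?case unfolding o using B P C by blast
next
  case (incl h)
  then obtain y z where yz: "y \<in> S" "z \<in> S" "h = torsion_map S op y z" by blast
  let ?t = "torsion_map S op y z"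
  note tp = tm_props[OF yz(1,2)]
  have yzS: "op y z \<in> S" using yz by simp
  have pres: "(?t x, ?t x') \<in> \<alpha>" if "(x, x') \<in> \<alpha>" for x x'
  proof -
    have xx: "x \<in> S" "x' \<in> S" using that cong_sub[OF A] by auto
    have "(op (op x y) z, op (op x' y) z) \<in> \<alpha>"
      using cong_op[OF A cong_op[OF A that cong_refl[OF A yz(1)]] cong_refl[OF A yz(2)]] .
    then have "(op (?t x) (op y z), op (?t x') (op y z)) \<in> \<alpha>" using tp(2) xx by simp
    then show ?thesis using cong_cancel[OF A tp(1)[OF xx(1)] tp(1)[OF xx(2)] yzS] by simp
  qed
  have cen: "(?t (op c x), op c (?t x)) \<in> \<alpha>" if c: "c \<in> S" "centralmod S op \<alpha> c" and x: "x \<in> S" for c x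
  proof -
    have cx: "op c x \<in> S" using c x by simp
    have tx: "?t x \<in> S" "?t (op c x) \<in> S" using tp(1) x cx by auto
    have xy: "op x y \<in> S" using x yz by simp
    have "(op (op (op c x) y) z, op (op c (op x y)) z) \<in> \<alpha>"
      using cong_op[OF A _ cong_refl[OF A yz(2)]] c(2) x yz(1) unfolding centralmod_def by blast
    moreover have "(op (op c (op x y)) z, op c (op (op x y) z)) \<in> \<alpha>"
      using c(2) xy yz(2) unfolding centralmod_def by blast
    moreover have "(op c (op (?t x) (op y z)), op (op c (?t x)) (op y z)) \<in> \<alpha>"
      using c(2) tx(1) yzS cong_sym[OF A] unfolding centralmod_def by blast
    ultimately have "(op (?t (op c x)) (op y z), op (op c (?t x)) (op y z)) \<in> \<alpha>"
      using tp(2)[OF cx] tp(2)[OF x] cong_trans[OF A] by metis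
    then show ?thesis using cong_cancel[OF A tx(2) op_in[OF c(1) tx(1)] yzS] by simp
  qed
  show ?case using tm_Bij[OF yz(1,2)] pres cen yz(3) by blast
next
  case (inv h)
  then obtain y z where yz: "y \<in> S" "z \<in> S" "h = torsion_map S op y z" by blast
  let ?t = "torsion_map S op y z"
  note tp = tm_props[OF yz(1,2)]
  have yzS: "op y z \<in> S" using yz by simp
  have tB: "?t \<in> Bij S" using tm_Bij[OF yz(1,2)] .
  have invh: "inv\<^bsub>BijGroup S\<^esub> h = (\<lambda>x\<in>S. inv_into S ?t x)" using inv_BijGroup[OF tB] yz(3) by simp
  have tS: "?t ` S = S" and tinj: "inj_on ?t S" using tB by (auto simp: Bij_def bij_betw_def)
  have iv: "inv_into S ?t s \<in> S" "?t (inv_into S ?t s) = s" if "s \<in> S" for s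
    using that tS inv_into_into[of s ?t S] f_inv_into_f[of s ?t S] by auto
  have refl: "(x, x') \<in> \<alpha>" if "(?t x, ?t x') \<in> \<alpha>" "x \<in> S" "x' \<in> S" for x x'
  proof -
    have "(op (?t x) (op y z), op (?t x') (op y z)) \<in> \<alpha>"
      using cong_op[OF A that(1) cong_refl[OF A yzS]] .
    then have "(op (op x y) z, op (op x' y) z) \<in> \<alpha>" using tp(2) that(2,3) by simp
    then have "(op x y, op x' y) \<in> \<alpha>" using cong_cancel[OF A _ _ yz(2)] that(2,3) yz by simp
    then show ?thesis using cong_cancel[OF A that(2,3) yz(1)] by simp
  qed
  have pres: "(inv_into S ?t s, inv_into S ?t s') \<in> \<alpha>" if "(s, s') \<in> \<alpha>" for s s'
  proof -
    have ss: "s \<in> S" "s' \<in> S" using that cong_sub[OF A] by auto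
    show ?thesis using refl[of "inv_into S ?t s" "inv_into S ?t s'"] iv ss that by simp
  qed
  have cen: "(inv_into S ?t (op c s), op c (inv_into S ?t s)) \<in> \<alpha>"
    if c: "c \<in> S" "centralmod S op \<alpha> c" and s: "s \<in> S" for c s
  proof -
    define w where "w = inv_into S ?t s"
    define u where "u = inv_into S ?t (op c s)"
    have w: "w \<in> S" "?t w = s" using iv[OF s] by (auto simp: w_def)
    have u: "u \<in> S" "?t u = op c s" using iv[OF op_in[OF c(1) s]] by (auto simp: u_def)
    have cw: "op c w \<in> S" using c w by simp
    have "(?t (op c w), op c (?t w)) \<in> \<alpha>"
    proof -
      have tx: "?t w \<in> S" "?t (op c w) \<in> S" using tp(1) w cw by auto
      have xy: "op w y \<in> S" using w yz by simp
      have "(op (op (op c w) y) z, op (op c (op w y)) z) \<in> \<alpha>"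
        using cong_op[OF A _ cong_refl[OF A yz(2)]] c(2) w yz(1) unfolding centralmod_def by blast
      moreover have "(op (op c (op w y)) z, op c (op (op w y) z)) \<in> \<alpha>"
        using c(2) xy yz(2) unfolding centralmod_def by blast
      moreover have "(op c (op (?t w) (op y z)), op (op c (?t w)) (op y z)) \<in> \<alpha>"
        using c(2) tx(1) yzS cong_sym[OF A] unfolding centralmod_def by blast
      ultimately have "(op (?t (op c w)) (op y z), op (op c (?t w)) (op y z)) \<in> \<alpha>"
        using tp(2)[OF cw] tp(2)[OF w(1)] cong_trans[OF A] by metis
      then show ?thesis using cong_cancel[OF A tx(2) op_in[OF c(1) tx(1)] yzS] by simp
    qed
    then have "(?t (op c w), ?t u) \<in> \<alpha>" using w(2) u(2) by simp
    then have "(op c w, u) \<in> \<alpha>" using refl cw u(1) by blast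
    then show ?thesis using cong_sym[OF A] by (simp add: w_def u_def)
  qed
  have B: "inv\<^bsub>BijGroup S\<^esub> h \<in> Bij S" using invh restrict_inv_into_Bij[OF tB] by simp
  have P: "((inv\<^bsub>BijGroup S\<^esub> h) x, (inv\<^bsub>BijGroup S\<^esub> h) x') \<in> \<alpha>" if "(x, x') \<in> \<alpha>" for x x'
    using pres[OF that] that cong_sub[OF A] invh by auto
  have C: "((inv\<^bsub>BijGroup S\<^esub> h) (op c x), op c ((inv\<^bsub>BijGroup S\<^esub> h) x)) \<in> \<alpha>"
    if "c \<in> S" "centralmod S op \<alpha> c" "x \<in> S" for c x
    using cen[OF that] that invh by simp
  show ?case using B P C by blast
next
  case (eng g h)
  have gB: "g \<in> Bij S" and hB: "h \<in> Bij S" using eng.IH by auto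
  have m: "g \<otimes>\<^bsub>BijGroup S\<^esub> h = compose S g h" using gB hB by (simp add: BijGroup_def)
  have B: "compose S g h \<in> Bij S" using compose_Bij[OF gB hB] .
  have P: "(compose S g h x, compose S g h x') \<in> \<alpha>" if "(x, x') \<in> \<alpha>" for x x'
  proof -
    have xx: "x \<in> S" "x' \<in> S" using that cong_sub[OF A] by auto
    have "(h x, h x') \<in> \<alpha>" using eng.IH(2) that by blast
    then have "(g (h x), g (h x')) \<in> \<alpha>" using eng.IH(1) by blast
    then show ?thesis using xx by (simp add: compose_def)
  qed
  have C: "(compose S g h (op c x), op c (compose S g h x)) \<in> \<alpha>"
    if c: "c \<in> S" "centralmod S op \<alpha> c" and x: "x \<in> S" for c x
  proof -
    have hx: "h x \<in> S" using Bij_S[OF hB x] .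
    have "(h (op c x), op c (h x)) \<in> \<alpha>" using eng.IH(2) c x by blast
    then have "(g (h (op c x)), g (op c (h x))) \<in> \<alpha>" using eng.IH(1) by blast
    moreover have "(g (op c (h x)), op c (g (h x))) \<in> \<alpha>" using eng.IH(1) c hx by blast
    ultimately have "(g (h (op c x)), op c (g (h x))) \<in> \<alpha>" by (rule cong_trans[OF A])
    then show ?thesis using x c by (simp add: compose_def)
  qed
  show ?case using B P C m by simp
qed

end

context rloop
begin

abbreviation GS :: "('a \<Rightarrow> 'a) set" where "GS \<equiv> generate (BijGroup S) gens"
abbreviation HH :: "('a \<Rightarrow> 'a) monoid" where "HH \<equiv> (BijGroup S)\<lparr>carrier := GS\<rparr>"

lemma GS_subgroup: "subgroup GS (BijGroup S)"
  by (rule group.generate_is_subgroup[OF group_BijGroup gens_sub])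

lemma grpH: "group HH"
  by (rule subgroup.subgroup_is_group[OF GS_subgroup group_BijGroup])

lemma GS_Bij: "g \<in> GS \<Longrightarrow> g \<in> Bij S"
  using subgroup.subset[OF GS_subgroup] by (auto simp: BijGroup_def)

lemma Bij_inv: assumes g: "g \<in> Bij S" and y: "y \<in> S"
  shows "(inv\<^bsub>BijGroup S\<^esub> g) y \<in> S" "g ((inv\<^bsub>BijGroup S\<^esub> g) y) = y"
proof -
  have gS: "g ` S = S" using g by (auto simp: Bij_def bij_betw_def)
  show "(inv\<^bsub>BijGroup S\<^esub> g) y \<in> S" "g ((inv\<^bsub>BijGroup S\<^esub> g) y) = y"
    using inv_BijGroup[OF g] y gS inv_into_into[of y g S] f_inv_into_f[of y g S] by auto
qed

definition Kset :: "'a rel \<Rightarrow> ('a \<Rightarrow> 'a) set" where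
  "Kset \<alpha> = {g \<in> GS. \<forall>x\<in>S. (g x, x) \<in> \<alpha>}"

lemma mult_G: "g \<in> Bij S \<Longrightarrow> h \<in> Bij S \<Longrightarrow> g \<otimes>\<^bsub>BijGroup S\<^esub> h = compose S g h"
  by (simp add: BijGroup_def)

lemma K_sub: assumes A: "congruence S op e \<alpha>" shows "subgroup (Kset \<alpha>) HH"
proof (rule subgroup.intro)
  show "Kset \<alpha> \<subseteq> carrier HH" by (auto simp: Kset_def)
  fix g h assume g: "g \<in> Kset \<alpha>" and h: "h \<in> Kset \<alpha>"
  have gG: "g \<in> GS" "g \<in> Bij S" and hG: "h \<in> GS" "h \<in> Bij S" using g h GS_Bij by (auto simp: Kset_def)
  have "g \<otimes>\<^bsub>BijGroup S\<^esub> h \<in> GS" using subgroup.m_closed[OF GS_subgroup gG(1) hG(1)] .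
  moreover have "((g \<otimes>\<^bsub>BijGroup S\<^esub> h) x, x) \<in> \<alpha>" if x: "x \<in> S" for x
  proof -
    have "(g (h x), h x) \<in> \<alpha>" using g Bij_S[OF hG(2) x] by (auto simp: Kset_def)
    moreover have "(h x, x) \<in> \<alpha>" using h x by (auto simp: Kset_def)
    ultimately have "(g (h x), x) \<in> \<alpha>" by (rule cong_trans[OF A])
    then show ?thesis using mult_G[OF gG(2) hG(2)] x by (simp add: compose_def)
  qed
  ultimately show "g \<otimes>\<^bsub>HH\<^esub> h \<in> Kset \<alpha>" by (simp add: Kset_def)
next
  have "\<one>\<^bsub>BijGroup S\<^esub> \<in> GS" by (rule generate.one)
  moreover have "\<one>\<^bsub>BijGroup S\<^esub> = (\<lambda>x\<in>S. x)" by (simp add: BijGroup_def)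
  ultimately show "\<one>\<^bsub>HH\<^esub> \<in> Kset \<alpha>" using cong_refl[OF A] by (simp add: Kset_def)
next
  fix g assume g: "g \<in> Kset \<alpha>"
  have gG: "g \<in> GS" "g \<in> Bij S" using g GS_Bij by (auto simp: Kset_def)
  have "inv\<^bsub>HH\<^esub> g = inv\<^bsub>BijGroup S\<^esub> g"
    using group.m_inv_consistent[OF group_BijGroup GS_subgroup gG(1)] .
  moreover have "inv\<^bsub>BijGroup S\<^esub> g \<in> GS" using subgroup.m_inv_closed[OF GS_subgroup gG(1)] .
  moreover have "((inv\<^bsub>BijGroup S\<^esub> g) x, x) \<in> \<alpha>" if x: "x \<in> S" for x
  proof -
    note w = Bij_inv[OF gG(2) x]
    have "(g ((inv\<^bsub>BijGroup S\<^esub> g) x), (inv\<^bsub>BijGroup S\<^esub> g) x) \<in> \<alpha>" using g w(1) by (auto simp: Kset_def)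
    then show ?thesis using w(2) cong_sym[OF A] by simp
  qed
  ultimately show "inv\<^bsub>HH\<^esub> g \<in> Kset \<alpha>" by (simp add: Kset_def)
qed

lemma commute_mod:
  assumes A: "congruence S op e \<alpha>" and A': "congruence S op e \<alpha>'"
    and Z: "\<alpha>' `` {e} \<subseteq> {c \<in> S. centralmod S op \<alpha> c}"
    and a: "a \<in> Kset \<alpha>'" and b: "b \<in> Kset \<alpha>'" and v: "v \<in> S"
  shows "(a (b v), b (a v)) \<in> \<alpha>"
proof -
  have aG: "a \<in> GS" "a \<in> Bij S" and bG: "b \<in> GS" "b \<in> Bij S" using a b GS_Bij by (auto simp: Kset_def)
  have av: "a v \<in> S" "(a v, v) \<in> \<alpha>'" using Bij_S[OF aG(2) v] a v by (auto simp: Kset_def)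
  have bv: "b v \<in> S" "(b v, v) \<in> \<alpha>'" using Bij_S[OF bG(2) v] b v by (auto simp: Kset_def)
  define c where "c = rdiv (a v) v"
  define d where "d = rdiv (b v) v"
  have c: "c \<in> S" "op c v = a v" using rdiv[OF v av(1)] by (auto simp: c_def)
  have d: "d \<in> S" "op d v = b v" using rdiv[OF v bv(1)] by (auto simp: d_def)
  have "(e, c) \<in> \<alpha>'" using cong_char[OF A' av(1) v] av(2) by (simp add: c_def)
  then have cc: "centralmod S op \<alpha> c" using Z by auto
  have "(e, d) \<in> \<alpha>'" using cong_char[OF A' bv(1) v] bv(2) by (simp add: d_def)
  then have dc: "centralmod S op \<alpha> d" using Z by auto
  note PA = GS_props[OF A aG(1)] and PB = GS_props[OF A bG(1)]
  have 1: "(a (b v), op d (a v)) \<in> \<alpha>" using PA d cc dc v by (metis)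
  have 2: "(b (a v), op c (b v)) \<in> \<alpha>" using PB c cc v by (metis)
  have dv: "op d v \<in> S" "op c v \<in> S" using c d v av(1) bv(1) by auto
  have 3: "(op d (op c v), op (op d c) v) \<in> \<alpha>"
    using dc c(1) v cong_sym[OF A] unfolding centralmod_def by blast
  have 4: "(op (op d c) v, op (op c d) v) \<in> \<alpha>"
    using cong_op[OF A _ cong_refl[OF A v]] dc c(1) unfolding centralmod_def by blast
  have 5: "(op (op c d) v, op c (op d v)) \<in> \<alpha>"
    using cc d(1) v unfolding centralmod_def by blast
  have "(op d (a v), op c (b v)) \<in> \<alpha>"
    using 3 4 5 c(2) d(2) cong_trans[OF A] by metis
  then show ?thesis using 1 2 cong_trans[OF A] cong_sym[OF A] by metis
qed

lemma derived_step:
  assumes A: "congruence S op e \<alpha>" and A': "congruence S op e \<alpha>'"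
    and Z: "\<alpha>' `` {e} \<subseteq> {c \<in> S. centralmod S op \<alpha> c}"
  shows "derived HH (Kset \<alpha>') \<subseteq> Kset \<alpha>"
  unfolding derived_def
proof (rule group.generate_subgroup_incl[OF grpH _ K_sub[OF A]])
  show "derived_set HH (Kset \<alpha>') \<subseteq> Kset \<alpha>"
  proof
    fix w assume "w \<in> derived_set HH (Kset \<alpha>')"
    then obtain a b where a: "a \<in> Kset \<alpha>'" and b: "b \<in> Kset \<alpha>'"
      and w: "w = a \<otimes>\<^bsub>HH\<^esub> b \<otimes>\<^bsub>HH\<^esub> inv\<^bsub>HH\<^esub> a \<otimes>\<^bsub>HH\<^esub> inv\<^bsub>HH\<^esub> b" by blast
    have aG: "a \<in> GS" "a \<in> Bij S" and bG: "b \<in> GS" "b \<in> Bij S" using a b GS_Bij by (auto simp: Kset_def)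
    have ia: "inv\<^bsub>HH\<^esub> a = inv\<^bsub>BijGroup S\<^esub> a"
      using group.m_inv_consistent[OF group_BijGroup GS_subgroup aG(1)] .
    have ib: "inv\<^bsub>HH\<^esub> b = inv\<^bsub>BijGroup S\<^esub> b"
      using group.m_inv_consistent[OF group_BijGroup GS_subgroup bG(1)] .
    define a' where "a' = inv\<^bsub>BijGroup S\<^esub> a"
    define b' where "b' = inv\<^bsub>BijGroup S\<^esub> b"
    have a'G: "a' \<in> GS" "a' \<in> Bij S" using subgroup.m_inv_closed[OF GS_subgroup aG(1)] GS_Bij by (auto simp: a'_def)
    have b'G: "b' \<in> GS" "b' \<in> Bij S" using subgroup.m_inv_closed[OF GS_subgroup bG(1)] GS_Bij by (auto simp: b'_def)
    have w1: "w = a \<otimes>\<^bsub>BijGroup S\<^esub> b \<otimes>\<^bsub>BijGroup S\<^esub> a' \<otimes>\<^bsub>BijGroup S\<^esub> b'"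
      using w ia ib by (simp add: a'_def b'_def)
    have c1: "compose S a b \<in> Bij S" using compose_Bij[OF aG(2) bG(2)] .
    have c2: "compose S (compose S a b) a' \<in> Bij S" using compose_Bij[OF c1 a'G(2)] .
    have w2: "w = compose S (compose S (compose S a b) a') b'"
      unfolding w1 mult_G[OF aG(2) bG(2)] mult_G[OF c1 a'G(2)] mult_G[OF c2 b'G(2)] ..
    have wG: "w \<in> GS"
      using w ia ib subgroup.m_closed[OF GS_subgroup] subgroup.m_inv_closed[OF GS_subgroup] aG bG by simp
    have "(w x, x) \<in> \<alpha>" if x: "x \<in> S" for x
    proof -
      have b'x: "b' x \<in> S" "b (b' x) = x" using Bij_inv[OF bG(2) x] by (auto simp: b'_def)
      define v where "v = a' (b' x)"
      have v: "v \<in> S" "a v = b' x" using Bij_inv[OF aG(2) b'x(1)] by (auto simp: a'_def v_def)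
      have wx: "w x = a (b v)" using w2 x b'x(1) v(1) Bij_S[OF bG(2) v(1)]
        by (simp add: compose_def v_def)
      have "(a (b v), b (a v)) \<in> \<alpha>" by (rule commute_mod[OF A A' Z a b v(1)])
      then show ?thesis using wx v(2) b'x(2) by simp
    qed
    then show "w \<in> Kset \<alpha>" using wG by (simp add: Kset_def)
  qed
qed

definition AA :: "nat \<Rightarrow> 'a rel" where
  "AA i = inv_cong S op e (upper_central S op e i)"

lemma AA: "congruence S op e (AA i)" "AA i `` {e} = upper_central S op e i"
proof -
  obtain \<alpha> where a: "congruence S op e \<alpha>" "\<alpha> `` {e} = upper_central S op e i"
    using upper_invariant by blast
  have "AA i = \<alpha>" using inv_cong_eq[OF a(1)] a(2) by (simp add: AA_def)
  then show "congruence S op e (AA i)" "AA i `` {e} = upper_central S op e i" using a by auto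
qed

lemma AA_step: "AA (Suc i) `` {e} \<subseteq> {c \<in> S. centralmod S op (AA i) c}"
  using AA(2)[of "Suc i"] upper_central_Suc[OF AA(1) AA(2)] by simp

lemma K_top: assumes "upper_central S op e n = S" shows "carrier HH \<subseteq> Kset (AA n)"
proof
  fix g assume g: "g \<in> carrier HH"
  then have gG: "g \<in> GS" "g \<in> Bij S" using GS_Bij by auto
  have "(g x, x) \<in> AA n" if x: "x \<in> S" for x
  proof -
    have gx: "g x \<in> S" using Bij_S[OF gG(2) x] .
    have "rdiv (g x) x \<in> AA n `` {e}" using AA(2)[of n] assms rdiv(1)[OF x gx] by simp
    then show ?thesis using cong_char[OF AA(1) gx x] by simp
  qed
  then show "g \<in> Kset (AA n)" using gG by (simp add: Kset_def)
qed

lemma K_bot: "Kset (AA 0) \<subseteq> {\<one>\<^bsub>HH\<^esub>}"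
proof
  fix g assume g: "g \<in> Kset (AA 0)"
  then have gG: "g \<in> GS" "g \<in> Bij S" using GS_Bij by (auto simp: Kset_def)
  have "g x = x" if x: "x \<in> S" for x
  proof -
    have gx: "g x \<in> S" using Bij_S[OF gG(2) x] .
    have "(g x, x) \<in> AA 0" using g x by (auto simp: Kset_def)
    then have "rdiv (g x) x \<in> AA 0 `` {e}" using cong_char[OF AA(1) gx x] by simp
    then have "rdiv (g x) x = e" using AA(2)[of 0] by simp
    then show ?thesis using rdiv(2)[OF x gx] x by simp
  qed
  moreover have "g \<in> extensional S" using gG(2) by (rule Bij_imp_extensional)
  ultimately have "g = (\<lambda>x\<in>S. x)" by (auto simp: extensional_def)
  then show "g \<in> {\<one>\<^bsub>HH\<^esub>}" by (simp add: BijGroup_def)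
qed

lemma derived_chain: assumes top: "upper_central S op e n = S"
  shows "k \<le> n \<Longrightarrow> (derived HH ^^ k) (carrier HH) \<subseteq> Kset (AA (n - k))"
proof (induction k)
  case 0
  then show ?case using K_top[OF top] by simp
next
  case (Suc k)
  then have IH: "(derived HH ^^ k) (carrier HH) \<subseteq> Kset (AA (n - k))" by simp
  have nk: "n - k = Suc (n - Suc k)" using Suc.prems by simp
  have "(derived HH ^^ Suc k) (carrier HH) = derived HH ((derived HH ^^ k) (carrier HH))" by simp
  also have "\<dots> \<subseteq> derived HH (Kset (AA (n - k)))" by (rule group.mono_derived[OF grpH IH])
  also have "\<dots> \<subseteq> Kset (AA (n - Suc k))"
    using derived_step[OF AA(1) AA(1) AA_step[of "n - Suc k"]] nk by simp
  finally show ?case .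
qed

theorem solvable_GS: assumes "nilpotent_right_loop S op e"
  shows "solvable HH"
proof -
  obtain n where top: "upper_central S op e n = S" using assms by (auto simp: nilpotent_right_loop_def)
  have "(derived HH ^^ n) (carrier HH) \<subseteq> {\<one>\<^bsub>HH\<^esub>}"
    using derived_chain[OF top, of n] K_bot by simp
  moreover have "\<one>\<^bsub>HH\<^esub> \<in> (derived HH ^^ n) (carrier HH)"
    using subgroup.one_closed[OF group.exp_of_derived_is_subgroup[OF grpH group.subgroup_self[OF grpH]]] .
  ultimately have "(derived HH ^^ n) (carrier HH) = {\<one>\<^bsub>HH\<^esub>}" by blast
  then show ?thesis using group.solvable_iff_trivial_derived_seq[OF grpH] by blast
qed

end

theorem mainTheorem15:
  fixes S :: "'a set" and op :: "'a \<Rightarrow> 'a \<Rightarrow> 'a" and e :: 'a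
  assumes "right_loop S op e"
    and "nilpotent_right_loop S op e"
  shows "solvable ((BijGroup S) \<lparr>carrier := group_torsion S op\<rparr>)"
proof -
  interpret rloop S op e by unfold_locales (rule assms(1))
  show ?thesis using solvable_GS[OF assms(2)] by (simp add: group_torsion_def)
qed

end
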